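(* Let $\mathcal{B}$ be a binary number format and $\mathbb{F}^E_m$ a floating-point format with $|\mathbb{F}^E_m\cap[0,1]|\le|\overline{\mathbb{R}}_{\mathcal{B}}|+1$, where $\overline{\mathbb{R}}_{\mathcal{B}}$ is the set of values of $\mathcal{B}$. Let $\mathcal{F}$ be the set of CDFs with atoms in $\overline{\mathbb{R}}_{\mathcal{B}}$ and cumulative probabilities in $\mathbb{F}^E_m$, i.e. probability distributions on the finite totally ordered set $\overline{\mathbb{R}}_{\mathcal{B}}$ whose cumulative probabilities $\Pr(\{y:y\le x\})$, $x\in\overline{\mathbb{R}}_{\mathcal{B}}$, all lie in $\mathbb{F}^E_m$. Then $\max_{F'\in\mathcal{F}}H(F')=m+2-2^{-2^{E-1}+3}$, where $H$ denotes Shannon entropy (in bits).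
   Context: $\overline{\mathbb{R}}=\mathbb{R}\cup\{-\infty,+\infty,\bot\}$ with the strict linear order $-\infty<$ reals $<+\infty<\bot$. A binary number format $\mathcal{B}=(n,\gamma_{\mathcal{B}},\phi_{\mathcal{B}})$ consists of $n\ge1$, a map $\gamma_{\mathcal{B}}:\{0,1\}^n\to\overline{\mathbb{R}}$, and a bijection $\phi_{\mathcal{B}}$ of $\{0,1\}^n$ with $b<_{\mathrm{dict}}b'\Rightarrow\gamma_{\mathcal{B}}(\phi_{\mathcal{B}}(b))\le\gamma_{\mathcal{B}}(\phi_{\mathcal{B}}(b'))$; its set of values is $\overline{\mathbb{R}}_{\mathcal{B}}=\gamma_{\mathcal{B}}(\{0,1\}^n)$. $\mathbb{F}^E_m$ is the IEEE-754-style set of floating-point numbers with $E$ exponent bits and $m$ mantissa bits (bias $2^{E-1}-1$, with subnormals), regarded as a set of reals; $\mathbb{F}^E_m\cap[0,1]$ counts zero once. *)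

theory Defs
  imports "HOL-Probability.Probability"
begin

section \<open>Extended reals with an error value: -inf < reals < +inf < bot\<close>

datatype xreal = NInf | Fin real | PInf | Bot

fun xrank :: "xreal \<Rightarrow> nat" where
  "xrank NInf = 0" | "xrank (Fin _) = 1" | "xrank PInf = 2" | "xrank Bot = 3"

instantiation xreal :: linorder
begin
definition less_eq_xreal :: "xreal \<Rightarrow> xreal \<Rightarrow> bool" where
  "less_eq_xreal x y = (case (x, y) of (Fin a, Fin b) \<Rightarrow> a \<le> b | _ \<Rightarrow> xrank x \<le> xrank y)"
definition less_xreal :: "xreal \<Rightarrow> xreal \<Rightarrow> bool" where
  "less_xreal x y = (x \<le> y \<and> \<not> y \<le> x)"
instance
proof
  fix x y z :: xreal
  show "(x < y) = (x \<le> y \<and> \<not> y \<le> x)" by (simp add: less_xreal_def)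
  show "x \<le> x" by (cases x) (auto simp: less_eq_xreal_def)
  show "x \<le> y \<Longrightarrow> y \<le> z \<Longrightarrow> x \<le> z"
    by (cases x; cases y; cases z) (auto simp: less_eq_xreal_def)
  show "x \<le> y \<Longrightarrow> y \<le> x \<Longrightarrow> x = y"
    by (cases x; cases y) (auto simp: less_eq_xreal_def)
  show "x \<le> y \<or> y \<le> x"
    by (cases x; cases y) (auto simp: less_eq_xreal_def)
qed
end

text \<open>Bit strings of length n are bool lists (False = 0, True = 1);
  the dictionary order is the lexicographic order ord_class.lexordp.\<close>

definition bitstrings :: "nat \<Rightarrow> bool list set" where
  "bitstrings n = {b. length b = n}"

definition binary_number_format ::
  "nat \<Rightarrow> (bool list \<Rightarrow> xreal) \<Rightarrow> (bool list \<Rightarrow> bool list) \<Rightarrow> bool" where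
  "binary_number_format n \<gamma> \<phi> \<longleftrightarrow>
     n \<ge> 1 \<and> bij_betw \<phi> (bitstrings n) (bitstrings n) \<and>
     (\<forall>b\<in>bitstrings n. \<forall>b'\<in>bitstrings n. ord_class.lexordp b b' \<longrightarrow> \<gamma> (\<phi> b) \<le> \<gamma> (\<phi> b'))"

definition bnf_values :: "nat \<Rightarrow> (bool list \<Rightarrow> xreal) \<Rightarrow> xreal set" where
  "bnf_values n \<gamma> = \<gamma> ` bitstrings n"

definition fp_bias :: "nat \<Rightarrow> int" where
  "fp_bias E = 2 ^ (E - 1) - 1"

definition fp_set :: "nat \<Rightarrow> nat \<Rightarrow> real set" where
  "fp_set E m =
     {(if s then -1 else 1) * 2 powr (real_of_int (int e - fp_bias E)) * (1 + real f / 2 ^ m)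
        | s e f. 1 \<le> e \<and> e \<le> 2 ^ E - 2 \<and> f < 2 ^ m}
   \<union> {(if s then -1 else 1) * 2 powr (real_of_int (1 - fp_bias E)) * (real f / 2 ^ m)
        | s f. f < (2::nat) ^ m}"

definition cdf_family :: "xreal set \<Rightarrow> real set \<Rightarrow> xreal pmf set" where
  "cdf_family R F = {p. set_pmf p \<subseteq> R \<and>
                        (\<forall>x\<in>R. measure_pmf.prob p {y. y \<le> x} \<in> F)}"

definition shannon_entropy :: "'a pmf \<Rightarrow> real" where
  "shannon_entropy p = - (\<Sum>x\<in>set_pmf p. pmf p x * log 2 (pmf p x))"

end

theory Submission
  imports Defs
begin

definition uu :: "nat \<Rightarrow> nat \<Rightarrow> nat" where
  "uu M i = (if i < M then i else 2^(i div M - 1) * (M + i mod M))"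

lemma uu_step:
  assumes M: "0 < M"
  shows "uu M (Suc i) = uu M i + 2^(i div M - 1)"
proof -
  consider "Suc i < M" | "Suc i = M" | "M \<le> i" by linarith
  then show ?thesis
  proof cases
    case 1 then show ?thesis by (simp add: uu_def)
  next
    case 2 then show ?thesis by (auto simp: uu_def)
  next
    case 3
    define t where "t = i div M"
    define f where "f = i mod M"
    have i: "i = t * M + f" by (simp add: t_def f_def)
    have t1: "t \<ge> 1" using div_le_mono[OF 3, of M] M by (simp add: t_def)
    have fM: "f < M" using M by (simp add: f_def)
    show ?thesis
    proof (cases "Suc f < M")
      case True
      have e: "Suc i = Suc f + M * t" using i by simp
      have "Suc i div M = t + Suc f div M" using M unfolding e
        by (subst div_mult_self2) auto
      moreover have "Suc i mod M = Suc f mod M" unfolding e by (subst mod_mult_self2) auto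
      ultimately have "Suc i div M = t" "Suc i mod M = Suc f" using True by simp_all
      then show ?thesis using 3 True by (simp add: uu_def t_def[symmetric] f_def[symmetric])
    next
      case False
      hence f: "Suc f = M" using fM by simp
      have si: "Suc i = Suc t * M" using i f by simp
      have "Suc i div M = Suc t" "Suc i mod M = 0" using si M by simp_all
      moreover have "(2::nat)^t * M = 2^(t-1) * (M + f) + 2^(t-1)"
      proof -
        have "(2::nat)^t = 2 * 2^(t-1)" using t1 by (metis Suc_diff_1 less_le_trans zero_less_one power_Suc)
        then show ?thesis using f[symmetric] by (simp add: algebra_simps)
      qed
      ultimately show ?thesis using 3 by (simp add: uu_def t_def[symmetric] f_def[symmetric])
    qed
  qed
qed

lemma uu_mono:
  assumes M: "0 < M" and "i < j"
  shows "uu M i < uu M j"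
  using assms(2)
proof (induction j)
  case 0 then show ?case by simp
next
  case (Suc j)
  have "uu M j < uu M (Suc j)" using uu_step[OF M, of j] by simp
  then show ?case using Suc by (metis less_Suc_eq order.strict_trans)
qed

lemma uu_mono_le: "0 < M \<Longrightarrow> i \<le> j \<Longrightarrow> uu M i \<le> uu M j"
  by (metis order_le_less uu_mono)

lemma uu_diff:
  assumes M: "0 < M" and "i \<le> j"
  shows "real (uu M j) - real (uu M i) = (\<Sum>k\<in>{i..<j}. (2::real)^(k div M - 1))"
  using assms(2)
proof (induction j)
  case 0 then show ?case by simp
next
  case (Suc j)
  show ?case
  proof (cases "i = Suc j")
    case True then show ?thesis by simp
  next
    case False
    then have "i \<le> j" using Suc.prems by simp
    then show ?thesis using Suc.IH uu_step[OF M, of j] by simp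
  qed
qed

lemma uu_top: "0 < M \<Longrightarrow> uu M (Suc B * M) = 2^B * M"
  by (simp add: uu_def)

lemma uu_small: "i < M \<Longrightarrow> uu M i = i"
  by (simp add: uu_def)

lemma uu_big: "0 < M \<Longrightarrow> 1 \<le> e \<Longrightarrow> f < M \<Longrightarrow> uu M (e * M + f) = 2^(e-1) * (M + f)"
proof -
  assume M: "0 < M" and e: "1 \<le> e" and f: "f < M"
  have "e * M + f \<ge> M" using e by (metis le_add1 mult_1 mult_le_mono1 order_trans)
  moreover have "(e * M + f) div M = e" using M f by simp
  moreover have "(e * M + f) mod M = f" using M f by simp
  ultimately show ?thesis by (simp add: uu_def)
qed

lemma bias_eq: "E \<ge> 2 \<Longrightarrow> fp_bias E = int (2^(E-1) - 2) + 1"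
proof -
  assume E: "E \<ge> 2"
  have "(2::nat)^(E-1) \<ge> 2^1" using E by (intro power_increasing) auto
  then show ?thesis by (simp add: fp_bias_def of_nat_diff)
qed

lemma normal_val:
  assumes "1 \<le> e" "fp_bias E = int B + 1"
  shows "2 powr (real_of_int (int e - fp_bias E)) * (1 + real f / 2^m)
         = real (2^(e-1)*(2^m+f)) / (2^B * 2^m)"
proof -
  have "real_of_int (int e - fp_bias E) = real (e-1) - real B" using assms by (simp add: of_nat_diff)
  then have "2 powr (real_of_int (int e - fp_bias E)) = 2^(e-1) / 2^B"
    by (simp add: powr_diff powr_realpow)
  moreover have "1 + real f / 2^m = (2^m + real f) / 2^m" by (simp add: field_simps)
  ultimately show ?thesis by simp
qed

lemma subnormal_val:
  assumes "fp_bias E = int B + 1"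
  shows "2 powr (real_of_int (1 - fp_bias E)) * (real f / 2^m) = real f / (2^B * 2^m)"
proof -
  have "real_of_int (1 - fp_bias E) = - real B" using assms by simp
  then have "2 powr (real_of_int (1 - fp_bias E)) = 1 / 2^B"
    by (simp add: powr_minus powr_realpow divide_inverse)
  then show ?thesis by simp
qed

lemma fp_char:
  fixes E m :: nat
  assumes E: "E \<ge> 2"
  defines "B \<equiv> 2^(E-1) - 2" and "M \<equiv> (2::nat)^m"
  shows "fp_set E m \<inter> {0..1} = (\<lambda>i. real (uu M i) / (2^B * 2^m)) ` {..Suc B * M}"
proof -
  have bias: "fp_bias E = int B + 1" using bias_eq[OF E] by (simp add: B_def)
  have M0: "0 < M" by (simp add: M_def)
  have MM: "real M = 2^m" by (simp add: M_def)
  have D0: "(0::real) < 2^B * 2^m" by simp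
  have top: "uu M (Suc B * M) = 2^B * M" using uu_top[OF M0] .
  show ?thesis
  proof (intro equalityI subsetI)
    fix x assume x: "x \<in> fp_set E m \<inter> {0..1}"
    then have x01: "0 \<le> x" "x \<le> 1" by auto
    from x have "x \<in> fp_set E m" by simp
    then consider (n) s e f where "x = (if s then -1 else 1) * 2 powr (real_of_int (int e - fp_bias E)) * (1 + real f / 2 ^ m)"
        "1 \<le> e" "e \<le> 2 ^ E - 2" "f < 2 ^ m"
      | (sub) s f where "x = (if s then -1 else 1) * 2 powr (real_of_int (1 - fp_bias E)) * (real f / 2 ^ m)" "f < (2::nat) ^ m"
      unfolding fp_set_def by (elim UnE CollectE exE conjE) blast+
    then show "x \<in> (\<lambda>i. real (uu M i) / (2^B * 2^m)) ` {..Suc B * M}"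
    proof cases
      case n
      define N where "N = 2^(e-1)*(M+f)"
      have val: "2 powr (real_of_int (int e - fp_bias E)) * (1 + real f / 2^m) = real N / (2^B * 2^m)"
        using normal_val[OF n(2) bias, of f m] by (simp add: N_def M_def)
      have Npos: "N > 0" using M0 by (simp add: N_def)
      have s: "\<not> s"
      proof
        assume s
        then have "x = - (real N / (2^B * 2^m))" using n(1) val by simp
        moreover have "real N / (2^B * 2^m) > 0" using Npos by simp
        ultimately show False using x01 by simp
      qed
      then have xv: "x = real N / (2^B * 2^m)" using n(1) val by simp
      then have "real N \<le> 2^B * 2^m" using x01 D0 by (simp add: divide_le_eq)
      then have "real N \<le> real (2^B * M)" by (simp add: M_def)
      then have ND: "N \<le> 2^B * M" by (simp only: of_nat_le_iff)
      have fM: "f < M" using n(4) by (simp add: M_def)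
      have eB: "e \<le> Suc B \<and> (e = Suc B \<longrightarrow> f = 0)"
      proof (rule ccontr)
        assume "\<not> ?thesis"
        then consider "e \<ge> B + 2" | "e = Suc B" "f > 0" by linarith
        then show False
        proof cases
          case 1
          then have "(2::nat)^(e-1) \<ge> 2^(Suc B)" by (intro power_increasing) auto
          then have "N \<ge> 2^(Suc B) * M" unfolding N_def by (intro mult_mono) auto
          moreover have "2^B * M < 2^(Suc B) * M" using M0 by simp
          ultimately show False using ND by linarith
        next
          case 2
          then have "N = 2^B * M + 2^B * f" by (simp add: N_def algebra_simps)
          then show False using ND 2 by simp
        qed
      qed
      have "e * M + f \<le> Suc B * M"
      proof (cases "e = Suc B")
        case True then show ?thesis using eB by simp
      next
        case False
        then have "e \<le> B" using eB by simp
        then have "e * M \<le> B * M" by (rule mult_le_mono1)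
        then have "e * M + f < B * M + M" using fM by linarith
        then show ?thesis by simp
      qed
      moreover have "uu M (e * M + f) = N" using uu_big[OF M0 n(2) fM] by (simp add: N_def)
      ultimately show ?thesis using xv by (intro image_eqI[where x="e*M+f"]) auto
    next
      case sub
      have val: "2 powr (real_of_int (1 - fp_bias E)) * (real f / 2^m) = real f / (2^B * 2^m)"
        using subnormal_val[OF bias] .
      have fM: "f < M" using sub(2) by (simp add: M_def)
      show ?thesis
      proof (cases s)
        case True
        then have "x = - (real f / (2^B * 2^m))" using sub(1) val by simp
        moreover have "real f / (2^B * 2^m) \<ge> 0" by simp
        ultimately have "x = 0" using x01 by linarith
        then show ?thesis using uu_small[OF M0] by (intro image_eqI[where x=0]) auto
      next
        case False
        then have "x = real f / (2^B * 2^m)" using sub(1) val by simp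
        moreover have "f \<le> Suc B * M" using fM by simp
        ultimately show ?thesis using uu_small[OF fM] by (intro image_eqI[where x=f]) auto
      qed
    qed
  next
    fix x assume "x \<in> (\<lambda>i. real (uu M i) / (2^B * 2^m)) ` {..Suc B * M}"
    then obtain i where i: "i \<le> Suc B * M" and xi: "x = real (uu M i) / (2^B * 2^m)" by auto
    have "uu M i \<le> 2^B * M" using uu_mono_le[OF M0 i] top by simp
    then have "real (uu M i) \<le> real (2^B * M)" by (simp only: of_nat_le_iff)
    then have "real (uu M i) \<le> 2^B * 2^m" by (simp add: M_def)
    then have x01: "x \<in> {0..1}" using xi D0 by simp
    have "x \<in> fp_set E m"
    proof (cases "i < M")
      case True
      have F1: "x = (if False then -1 else 1) * 2 powr (real_of_int (1 - fp_bias E)) * (real i / 2 ^ m)"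
        using subnormal_val[OF bias, of i m] xi uu_small[OF True] by simp
      have F2: "i < (2::nat)^m" using True by (simp add: M_def)
      show ?thesis unfolding fp_set_def
        by (intro UnI2 CollectI exI[where x=False] exI[where x=i] conjI F1 F2)
    next
      case False
      define e where "e = i div M"
      define f where "f = i mod M"
      have ie: "i = e * M + f" by (simp add: e_def f_def)
      have e1: "1 \<le> e" using div_le_mono[of M i M] False M0 by (simp add: e_def)
      have fM: "f < M" using M0 by (simp add: f_def)
      have "e \<le> Suc B" using div_le_mono[OF i, of M] M0 by (simp add: e_def)
      moreover have "Suc B \<le> 2^E - 2"
      proof -
        have "(2::nat)^(E-1) \<ge> 2^1" using E by (intro power_increasing) auto
        moreover have "(2::nat)^E = 2 * 2^(E-1)" proof -
          have "E = Suc (E-1)" using E by simp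
          then show ?thesis by (metis power_Suc)
        qed
        ultimately show ?thesis by (simp add: B_def)
      qed
      ultimately have eE: "e \<le> 2^E - 2" by linarith
      have F1: "x = (if False then -1 else 1) * 2 powr (real_of_int (int e - fp_bias E)) * (1 + real f / 2 ^ m)"
        using normal_val[OF e1 bias, of f m] xi uu_big[OF M0 e1 fM] ie by (simp add: M_def)
      have F2: "f < 2^m" using fM by (simp add: M_def)
      show ?thesis unfolding fp_set_def
        by (intro UnI1 CollectI exI[where x=False] exI[where x=e] exI[where x=f] conjI F1 F2 e1 eE)
    qed
    then show "x \<in> fp_set E m \<inter> {0..1}" using x01 by simp
  qed
qed

lemma sum_div_group:
  fixes F :: "nat \<Rightarrow> real"
  assumes M: "0 < M"
  shows "(\<Sum>k<n*M. F (k div M)) = (\<Sum>t<n. real M * F t)"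
proof (induction n)
  case 0 then show ?case by simp
next
  case (Suc n)
  have "(\<Sum>k<Suc n*M. F (k div M)) = (\<Sum>k\<in>{0..<n*M}. F (k div M)) + (\<Sum>k\<in>{n*M..<n*M+M}. F (k div M))"
    using sum.atLeastLessThan_concat[of 0 "n*M" "n*M+M" "\<lambda>k. F (k div M)"]
    by (simp add: lessThan_atLeast0 add.commute)
  also have "(\<Sum>k\<in>{n*M..<n*M+M}. F (k div M)) = (\<Sum>k\<in>{n*M..<n*M+M}. F n)"
  proof (rule sum.cong)
    fix k assume k: "k \<in> {n*M..<n*M+M}"
    then obtain r where "k = n*M + r" "r < M" by (metis atLeastLessThan_iff le_Suc_ex nat_add_left_cancel_less)
    then show "F (k div M) = F n" using M by simp
  qed simp
  also have "\<dots> = real M * F n" by simp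
  finally show ?case using Suc by (simp add: lessThan_atLeast0)
qed

lemma pow_sum_aux: "(\<Sum>t<Suc B. (2::real)^(t-1)) = 2^B"
proof (induction B)
  case 0 then show ?case by simp
next
  case (Suc B) then show ?case by simp
qed

lemma phi_closed: "(\<Sum>t<Suc B. (2::real)^(t-1) * (real B + real m - real (t-1))) = 2^B * (real m + 2) - 2"
proof (induction B)
  case 0 then show ?case by simp
next
  case (Suc B)
  have "(\<Sum>t<Suc (Suc B). (2::real)^(t-1) * (real (Suc B) + real m - real (t-1)))
     = (\<Sum>t<Suc B. (2::real)^(t-1) * (real B + real m - real (t-1)) + 2^(t-1)) + 2^B * (real m + 1)"
    by (simp add: algebra_simps)
  also have "\<dots> = (2^B * (real m + 2) - 2) + 2^B + 2^B * (real m + 1)"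
    by (simp only: sum.distrib Suc.IH pow_sum_aux)
  also have "\<dots> = 2^(Suc B) * (real m + 2) - 2" by (simp add: algebra_simps)
  finally show ?case .
qed

lemma entropy_sum:
  fixes B m :: nat
  defines "M \<equiv> (2::nat)^m"
  defines "g \<equiv> \<lambda>k. (2::real)^(k div M - 1) / (2^B * 2^m)"
  shows "(\<Sum>k<Suc B * M. - (g k * log 2 (g k))) = real m + 2 - 2 / 2^B"
proof -
  have M0: "0 < M" by (simp add: M_def)
  define TT where "TT t = (2::real)^(t-1) / (2^B * 2^m) * (real B + real m - real (t-1))" for t
  have "- (g k * log 2 (g k)) = TT (k div M)" for k
  proof -
    have "g k = 2 powr (real (k div M - 1) - (real B + real m))"
      by (simp add: g_def powr_diff powr_add powr_realpow)
    then have L: "log 2 (g k) = real (k div M - 1) - (real B + real m)"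
      by simp
    have "-(g k * log 2 (g k)) = g k * (real B + real m - real (k div M - 1))"
      unfolding L by (simp add: algebra_simps)
    then show ?thesis by (simp add: TT_def g_def)
  qed
  then have "(\<Sum>k<Suc B * M. - (g k * log 2 (g k))) = (\<Sum>k<Suc B * M. TT (k div M))" by simp
  also have "\<dots> = (\<Sum>t<Suc B. real M * TT t)" by (rule sum_div_group[OF M0])
  also have "\<dots> = (\<Sum>t<Suc B. (2::real)^(t-1) * (real B + real m - real (t-1))) / 2^B"
    unfolding sum_divide_distrib by (rule sum.cong) (simp_all add: TT_def M_def)
  also have "\<dots> = real m + 2 - 2 / 2^B" unfolding phi_closed by (simp add: field_simps)
  finally show ?thesis .
qed

definition fe :: "real \<Rightarrow> real" where "fe t = - (t * log 2 t)"

lemma fe_0[simp]: "fe 0 = 0" by (simp add: fe_def)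

lemma fe_subadd:
  assumes "0 \<le> a" "0 \<le> b"
  shows "fe (a + b) \<le> fe a + fe b"
proof (cases "a = 0 \<or> b = 0")
  case True then show ?thesis by auto
next
  case False
  then have a: "0 < a" and b: "0 < b" using assms by auto
  have "log 2 a \<le> log 2 (a + b)" using a b by simp
  moreover have "log 2 b \<le> log 2 (a + b)" using a b by simp
  ultimately have "a * log 2 a + b * log 2 b \<le> a * log 2 (a+b) + b * log 2 (a+b)"
    using a b by (intro add_mono mult_left_mono) auto
  then show ?thesis by (simp add: fe_def algebra_simps)
qed

lemma fe_sum:
  assumes "finite A" "\<And>a. a \<in> A \<Longrightarrow> 0 \<le> h a"
  shows "fe (sum h A) \<le> (\<Sum>a\<in>A. fe (h a))"
  using assms
proof (induction A rule: finite_induct)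
  case empty then show ?case by simp
next
  case (insert x F)
  have "fe (sum h (insert x F)) = fe (h x + sum h F)" using insert by simp
  also have "\<dots> \<le> fe (h x) + fe (sum h F)"
    using insert by (intro fe_subadd) (auto intro: sum_nonneg)
  also have "\<dots> \<le> fe (h x) + (\<Sum>a\<in>F. fe (h a))" using insert by simp
  finally show ?case using insert by simp
qed

lemma fe_nonneg: "0 \<le> t \<Longrightarrow> t \<le> 1 \<Longrightarrow> 0 \<le> fe t"
proof -
  assume "0 \<le> t" "t \<le> 1"
  then show "0 \<le> fe t"
    by (cases "t = 0") (auto simp: fe_def mult_nonneg_nonpos)
qed

lemma entropy_fe: "shannon_entropy p = (\<Sum>x\<in>set_pmf p. fe (pmf p x))"
  by (simp add: shannon_entropy_def fe_def sum_negf)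

lemma prob_sum:
  assumes "finite R" "set_pmf p \<subseteq> R"
  shows "measure_pmf.prob p A = sum (pmf p) (A \<inter> R)"
proof -
  have fin: "finite (set_pmf p)" using assms finite_subset by blast
  have "measure_pmf.prob p A = measure_pmf.prob p (A \<inter> set_pmf p)" by (simp add: measure_Int_set_pmf)
  also have "\<dots> = sum (pmf p) (A \<inter> set_pmf p)" using fin by (simp add: measure_measure_pmf_finite)
  also have "\<dots> = sum (pmf p) (A \<inter> R)"
    using assms by (intro sum.mono_neutral_left) (auto simp: set_pmf_eq)
  finally show ?thesis .
qed

lemma upper_generic:
  fixes R :: "'a::linorder set" and v :: "nat \<Rightarrow> real" and p :: "'a pmf"
  assumes fin: "finite R" and vmono: "\<And>i j. i < j \<Longrightarrow> v i < v j"
    and v0: "v 0 = 0" and vK: "v K = 1"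
    and supp: "set_pmf p \<subseteq> R"
    and cdf: "\<forall>x\<in>R. measure_pmf.prob p {y. y \<le> x} \<in> v ` {..K}"
  shows "shannon_entropy p \<le> (\<Sum>k<K. fe (v (Suc k) - v k))"
proof -
  have vle: "i \<le> j" if "v i \<le> v j" for i j using vmono[of j i] that by (cases "j < i") auto
  define P where "P x = sum (pmf p) ({y. y \<le> x} \<inter> R)" for x
  define Q where "Q x = sum (pmf p) ({y. y < x} \<inter> R)" for x
  have "\<forall>x\<in>R. \<exists>i. i \<le> K \<and> P x = v i"
    using cdf prob_sum[OF fin supp] unfolding P_def by fastforce
  then obtain c where c: "\<And>x. x \<in> R \<Longrightarrow> c x \<le> K \<and> P x = v (c x)" by metis
  have "\<forall>x\<in>R. \<exists>i. i \<le> K \<and> Q x = v i"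
  proof
    fix x assume x: "x \<in> R"
    show "\<exists>i. i \<le> K \<and> Q x = v i"
    proof (cases "{y\<in>R. y < x} = {}")
      case True
      then have "{y. y < x} \<inter> R = {}" by auto
      then show ?thesis using v0 by (auto simp: Q_def)
    next
      case False
      define x' where "x' = Max {y\<in>R. y < x}"
      have finL: "finite {y\<in>R. y < x}" using fin by simp
      have x'R: "x' \<in> R" "x' < x" using Max_in[OF finL False] by (auto simp: x'_def)
      have "{y. y < x} \<inter> R = {y. y \<le> x'} \<inter> R"
      proof (intro equalityI subsetI)
        fix y assume "y \<in> {y. y < x} \<inter> R"
        then show "y \<in> {y. y \<le> x'} \<inter> R" using Max_ge[OF finL] by (auto simp: x'_def)
      next
        fix y assume "y \<in> {y. y \<le> x'} \<inter> R"
        then show "y \<in> {y. y < x} \<inter> R" using x'R by auto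
      qed
      then have "Q x = P x'" by (simp add: P_def Q_def)
      then show ?thesis using c[OF x'R(1)] by metis
    qed
  qed
  then obtain d where d: "\<And>x. x \<in> R \<Longrightarrow> d x \<le> K \<and> Q x = v (d x)" by metis
  have pmfPQ: "pmf p x = P x - Q x" if "x \<in> R" for x
  proof -
    have "{y. y \<le> x} \<inter> R = insert x ({y. y < x} \<inter> R)" using that by auto
    then have "P x = pmf p x + Q x" unfolding P_def Q_def using fin by simp
    then show ?thesis by simp
  qed
  have dc: "d x \<le> c x" if "x \<in> R" for x
    using pmfPQ[OF that] c[OF that] d[OF that] vle[of "d x" "c x"] pmf_nonneg[of p x] by simp
  define I where "I x = {d x..<c x}" for x
  have pmfI: "pmf p x = (\<Sum>k\<in>I x. v (Suc k) - v k)" if "x \<in> R" for x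
    using pmfPQ[OF that] c[OF that] d[OF that] dc[OF that] by (simp add: I_def sum_Suc_diff')
  have gpos: "0 \<le> v (Suc k) - v k" for k using vmono[of k "Suc k"] by simp
  have gle1: "v (Suc k) - v k \<le> 1" if "k < K" for k
  proof -
    have "v 0 \<le> v k" using vmono[of 0 k] by (cases k) auto
    moreover have "v (Suc k) \<le> v K" using vmono[of "Suc k" K] that by (cases "Suc k = K") auto
    ultimately show ?thesis using v0 vK by simp
  qed
  have disj: "I x \<inter> I x' = {}" if "x \<in> R" "x' \<in> R" "x \<noteq> x'" for x x'
  proof -
    have key: "c a \<le> d b" if ab: "a \<in> R" "b \<in> R" "a < b" for a b
    proof -
      have "{y. y \<le> a} \<inter> R \<subseteq> {y. y < b} \<inter> R" using ab by auto
      then have "P a \<le> Q b" unfolding P_def Q_def using fin by (intro sum_mono2) auto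
      then show ?thesis using c[OF ab(1)] d[OF ab(2)] vle by simp
    qed
    show ?thesis
    proof (cases "x < x'")
      case True then show ?thesis using key[OF that(1,2) True] by (auto simp: I_def)
    next
      case False
      then have "x' < x" using that(3) by auto
      then show ?thesis using key[OF that(2,1)] by (auto simp: I_def)
    qed
  qed
  have "shannon_entropy p = (\<Sum>x\<in>set_pmf p. fe (pmf p x))" by (rule entropy_fe)
  also have "\<dots> = (\<Sum>x\<in>R. fe (pmf p x))"
    using fin supp by (intro sum.mono_neutral_left) (auto simp: set_pmf_eq)
  also have "\<dots> \<le> (\<Sum>x\<in>R. \<Sum>k\<in>I x. fe (v (Suc k) - v k))"
  proof (rule sum_mono)
    fix x assume x: "x \<in> R"
    show "fe (pmf p x) \<le> (\<Sum>k\<in>I x. fe (v (Suc k) - v k))"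
      unfolding pmfI[OF x] by (rule fe_sum) (use gpos in \<open>auto simp: I_def\<close>)
  qed
  also have "\<dots> = (\<Sum>k\<in>(\<Union>x\<in>R. I x). fe (v (Suc k) - v k))"
    using fin disj by (subst sum.UNION_disjoint) (auto simp: I_def)
  also have "\<dots> \<le> (\<Sum>k<K. fe (v (Suc k) - v k))"
  proof (rule sum_mono2)
    show "(\<Union>x\<in>R. I x) \<subseteq> {..<K}" using c by (fastforce simp: I_def)
    show "\<And>k. k \<in> {..<K} - (\<Union>x\<in>R. I x) \<Longrightarrow> 0 \<le> fe (v (Suc k) - v k)"
      using gpos gle1 fe_nonneg by auto
  qed simp
  finally show ?thesis .
qed

lemma exists_generic:
  fixes R :: "'a::linorder set" and v :: "nat \<Rightarrow> real"
  assumes fin: "finite R" and KR: "K \<le> card R" and vmono: "\<And>i j. i < j \<Longrightarrow> v i < v j"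
    and v0: "v 0 = 0" and vK: "v K = 1"
  shows "\<exists>p. set_pmf p \<subseteq> R \<and> (\<forall>x\<in>R. measure_pmf.prob p {y. y \<le> x} \<in> v ` {..K})
            \<and> shannon_entropy p = (\<Sum>k<K. fe (v (Suc k) - v k))"
proof -
  define xs where "xs = sorted_list_of_set R"
  have xs_sorted: "sorted_wrt (<) xs" by (simp add: xs_def)
  have xs_set: "set xs = R" using fin by (simp add: xs_def)
  have xs_len: "length xs = card R" by (simp add: xs_def)
  define e where "e k = xs ! k" for k
  have emono: "e i < e j" if "i < j" "j < card R" for i j
    using sorted_wrt_nth_less[OF xs_sorted that(1)] that xs_len by (simp add: e_def)
  have ele: "e i \<le> e j \<longleftrightarrow> i \<le> j" if "i < card R" "j < card R" for i j
  proof
    assume "e i \<le> e j" then show "i \<le> j" using emono[of j i] that by (cases "j < i") auto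
  next
    assume "i \<le> j" then show "e i \<le> e j" using emono[of i j] that by (cases "i = j") auto
  qed
  have eR: "e k \<in> R" if "k < card R" for k using that xs_set xs_len by (auto simp: e_def)
  have Re: "\<exists>j<card R. x = e j" if "x \<in> R" for x
  proof -
    have "x \<in> set xs" using that xs_set by simp
    then obtain j where "j < length xs" "xs ! j = x" by (meson in_set_conv_nth)
    then show ?thesis using xs_len by (auto simp: e_def)
  qed
  have einj: "inj_on e {..<K}"
  proof (rule inj_onI)
    fix i j assume "i \<in> {..<K}" "j \<in> {..<K}" "e i = e j"
    then show "i = j" using ele[of i j] ele[of j i] KR by auto
  qed
  define w where "w k = (if k < K then v (Suc k) - v k else 0)" for k
  have wnn: "0 \<le> w k" for k using vmono[of k "Suc k"] by (simp add: w_def)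
  have wsum: "(\<Sum>k<n. w k) = v (min n K)" for n
  proof -
    have "(\<Sum>k<n. w k) = (\<Sum>k<min n K. v (Suc k) - v k)"
      by (rule sum.mono_neutral_cong_right) (auto simp: w_def)
    also have "\<dots> = v (min n K)" using v0 by (simp add: sum_lessThan_telescope)
    finally show ?thesis .
  qed
  have int1: "(\<integral>\<^sup>+k. ennreal (w k) \<partial>count_space UNIV) = 1"
  proof -
    have "(\<integral>\<^sup>+k. ennreal (w k) \<partial>count_space UNIV) = (\<Sum>k<K. ennreal (w k))"
      by (rule nn_integral_count_space') (auto simp: w_def)
    also have "\<dots> = ennreal (\<Sum>k<K. w k)" using wnn by simp
    also have "\<dots> = 1" using wsum[of K] vK by simp
    finally show ?thesis .
  qed
  define q where "q = embed_pmf w"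
  have pmfq: "pmf q k = w k" for k unfolding q_def by (rule pmf_embed_pmf[OF wnn int1])
  have setq: "set_pmf q = {..<K}"
  proof -
    have "w k \<noteq> 0 \<longleftrightarrow> k < K" for k
      using vmono[of k "Suc k"] by (simp add: w_def)
    then show ?thesis unfolding q_def set_embed_pmf[OF wnn int1] by auto
  qed
  define p where "p = map_pmf e q"
  have setp: "set_pmf p = e ` {..<K}" by (simp add: p_def setq)
  have suppR: "set_pmf p \<subseteq> R" using setp eR KR by auto
  have pmfp: "pmf p (e k) = w k" if "k < K" for k
    unfolding p_def using that einj by (subst pmf_map_inj) (auto simp: setq pmfq)
  have cdf: "\<forall>x\<in>R. measure_pmf.prob p {y. y \<le> x} \<in> v ` {..K}"
  proof
    fix x assume "x \<in> R"
    then obtain j where j: "j < card R" "x = e j" using Re by blast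
    have "measure_pmf.prob p {y. y \<le> x} = measure_pmf.prob q (e -` {y. y \<le> x})" by (simp add: p_def)
    also have "\<dots> = sum (pmf q) (e -` {y. y \<le> x} \<inter> {..<K})"
      by (rule prob_sum) (auto simp: setq)
    also have "e -` {y. y \<le> x} \<inter> {..<K} = {..<min (Suc j) K}"
    proof (intro equalityI subsetI)
      fix k assume k: "k \<in> e -` {y. y \<le> x} \<inter> {..<K}"
      then have "k < card R" "e k \<le> e j" using KR j by auto
      then have "k \<le> j" using ele[of k j] j by simp
      then show "k \<in> {..<min (Suc j) K}" using k by simp
    next
      fix k assume k: "k \<in> {..<min (Suc j) K}"
      then have "k < card R" "k \<le> j" using KR by auto
      then have "e k \<le> e j" using ele[of k j] j by simp
      then show "k \<in> e -` {y. y \<le> x} \<inter> {..<K}" using k j by simp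
    qed
    also have "sum (pmf q) {..<min (Suc j) K} = v (min (min (Suc j) K) K)" by (simp add: pmfq wsum)
    finally show "measure_pmf.prob p {y. y \<le> x} \<in> v ` {..K}" by auto
  qed
  have "shannon_entropy p = (\<Sum>x\<in>e ` {..<K}. fe (pmf p x))" by (simp add: entropy_fe setp)
  also have "\<dots> = (\<Sum>k<K. fe (pmf p (e k)))" using einj by (simp add: sum.reindex)
  also have "\<dots> = (\<Sum>k<K. fe (v (Suc k) - v k))" by (rule sum.cong) (auto simp: pmfp w_def)
  finally show ?thesis using suppR cdf by blast
qed

theorem propositionD3:
  fixes n E m :: nat and \<gamma> :: "bool list \<Rightarrow> xreal" and \<phi> :: "bool list \<Rightarrow> bool list"
  assumes "binary_number_format n \<gamma> \<phi>"
    and "E \<ge> 2"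
    and "card (fp_set E m \<inter> {0..1}) \<le> card (bnf_values n \<gamma>) + 1"
  shows "(\<exists>p\<in>cdf_family (bnf_values n \<gamma>) (fp_set E m).
            shannon_entropy p = real m + 2 - 2 powr (3 - 2 ^ (E - 1))) \<and>
         (\<forall>p\<in>cdf_family (bnf_values n \<gamma>) (fp_set E m).
            shannon_entropy p \<le> real m + 2 - 2 powr (3 - 2 ^ (E - 1)))"
proof -
  define R where "R = bnf_values n \<gamma>"
  define B where "B = (2::nat)^(E-1) - 2"
  define M where "M = (2::nat)^m"
  define K where "K = Suc B * M"
  define v where "v i = real (uu M i) / (2^B * 2^m)" for i
  have M0: "0 < M" by (simp add: M_def)
  have D0: "(0::real) < 2^B * 2^m" by simp
  have vmono: "v i < v j" if "i < j" for i j
    using uu_mono[OF M0 that] D0 unfolding v_def by (simp add: divide_strict_right_mono)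
  have v0: "v 0 = 0" using M0 by (simp add: v_def uu_def)
  have vK: "v K = 1" using uu_top[OF M0, of B] by (simp add: v_def K_def M_def)
  have S: "fp_set E m \<inter> {0..1} = v ` {..K}"
    using fp_char[OF assms(2)] by (simp add: v_def K_def B_def M_def)
  have injv: "inj_on v {..K}"
    by (rule inj_onI) (metis linorder_neqE_nat vmono order_less_irrefl)
  have "card (fp_set E m \<inter> {0..1}) = Suc K" unfolding S using injv by (simp add: card_image)
  then have KR: "K \<le> card R" using assms(3) by (simp add: R_def)
  have "0 < K" using M0 by (simp add: K_def)
  then have finR: "finite R" using KR card.infinite by fastforce
  have gk: "v (Suc k) - v k = (2::real)^(k div M - 1) / (2^B * 2^m)" for k
  proof -
    have "real (uu M (Suc k)) = real (uu M k) + 2^(k div M - 1)" using uu_step[OF M0, of k] by simp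
    then show ?thesis unfolding v_def by (simp add: field_simps)
  qed
  have "2 ^ (E - 1) = real B + 2"
  proof -
    have "(2::nat)^(E-1) \<ge> 2^1" using assms(2) by (intro power_increasing) auto
    then have "real ((2::nat)^(E-1)) = real B + 2" by (simp add: B_def of_nat_diff)
    then show ?thesis by simp
  qed
  then have "(2::real) powr (3 - 2 ^ (E - 1)) = 2 powr (1 - real B)" by simp
  also have "\<dots> = 2 / 2^B" by (simp add: powr_diff powr_realpow)
  finally have pw: "(2::real) powr (3 - 2 ^ (E - 1)) = 2 / 2^B" .
  have target: "(\<Sum>k<K. fe (v (Suc k) - v k)) = real m + 2 - 2 powr (3 - 2 ^ (E - 1))"
    unfolding pw gk K_def fe_def using entropy_sum[where B=B and m=m] by (simp add: M_def)
  have sub: "v ` {..K} \<subseteq> fp_set E m" using S by blast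
  show ?thesis
  proof
    obtain p where p: "set_pmf p \<subseteq> R" "\<forall>x\<in>R. measure_pmf.prob p {y. y \<le> x} \<in> v ` {..K}"
        "shannon_entropy p = (\<Sum>k<K. fe (v (Suc k) - v k))"
      using exists_generic[OF finR KR vmono v0 vK] by blast
    have pc: "p \<in> cdf_family (bnf_values n \<gamma>) (fp_set E m)"
      using p(1,2) sub unfolding cdf_family_def R_def by blast
    have pe: "shannon_entropy p = real m + 2 - 2 powr (3 - 2 ^ (E - 1))"
      using p(3) target by simp
    show "\<exists>p\<in>cdf_family (bnf_values n \<gamma>) (fp_set E m).
            shannon_entropy p = real m + 2 - 2 powr (3 - 2 ^ (E - 1))" using pc pe by blast
  next
    show "\<forall>p\<in>cdf_family (bnf_values n \<gamma>) (fp_set E m).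
            shannon_entropy p \<le> real m + 2 - 2 powr (3 - 2 ^ (E - 1))"
    proof
      fix p assume "p \<in> cdf_family (bnf_values n \<gamma>) (fp_set E m)"
      then have p: "set_pmf p \<subseteq> R" "\<forall>x\<in>R. measure_pmf.prob p {y. y \<le> x} \<in> fp_set E m"
        unfolding cdf_family_def R_def by auto
      have "\<forall>x\<in>R. measure_pmf.prob p {y. y \<le> x} \<in> v ` {..K}"
      proof
        fix x assume "x \<in> R"
        then have "measure_pmf.prob p {y. y \<le> x} \<in> fp_set E m \<inter> {0..1}"
          using p(2) by (simp add: measure_pmf.prob_le_1)
        then show "measure_pmf.prob p {y. y \<le> x} \<in> v ` {..K}" using S by simp
      qed
      then show "shannon_entropy p \<le> real m + 2 - 2 powr (3 - 2 ^ (E - 1))"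
        using upper_generic[OF finR vmono v0 vK p(1)] target by simp
    qed
  qed
qed

end
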